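(* Fix integers $n,d\ge 1$, constants $0<h_{min}<h_{max}$, an initial state $\mathcal{X}^{(0)}\in\mathbb{R}^{dn}$, an initial bandwidth $h_1\in[h_{min},h_{max}]$, and a non-negative sequence $(\nu_k)$ with $\nu_k\to 0$, and let $(\mathcal{X}^{(k)},h_k,i_k)$ be generated by the Doubly Stochastic Mean-Shift (DSMS) process described in the context. Let $\epsilon>0$. For $k_0\in\mathbb{N}$ define the event $$A_\epsilon(k_0)=\left\{\omega:\ \forall k\ge k_0,\ \big\|\nabla_{\mathbf{x}_{i_k}}L_{h_{k+1}}(\mathcal{X}^{(k)})(\omega)\big\|<\epsilon\right\},$$ and define stopping times $T_1=\min\{k\in\mathbb{N}:\ \|\nabla L_{h_{k+1}}(\mathcal{X}^{(k)})\|_{\max}\ge\epsilon\}$ and, for $p\ge 2$, $T_p=\min\{k>T_{p-1}:\ \|\nabla L_{h_{k+1}}(\mathcal{X}^{(k)})\|_{\max}\ge\epsilon\}$ (each set to $\infty$ if no such $k$ exists). Then for every $k_0\in\mathbb{N}$ and every integer $p\ge 0$, $$\mathbb{P}\left[\{T_{k_0+p}<\infty\}\cap A_\epsilon(k_0)\right]\le\left(1-\frac1n\right)^p.$$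
   Context: A profile function is a map $k:[0,\infty)\to\mathbb{R}_+$ that vanishes on $[1,\infty)$, is $C^1$, non-increasing and convex, with $k'(t)<0$ for all $t\in[0,1)$. The associated kernel is $K(\mathbf{u})=k(\|\mathbf{u}\|^2)$ on $\mathbb{R}^d$ and the weight function is $G(\mathbf{u})=-k'(\|\mathbf{u}\|^2)$; $\|\cdot\|$ is the Euclidean norm. A state is $\mathcal{X}=[\mathbf{x}_1,\ldots,\mathbf{x}_n]\in\mathbb{R}^{dn}$ with $\mathbf{x}_i\in\mathbb{R}^d$. For $h>0$, $L_h(\mathcal{X})=\sum_{1\le i\le j\le n}K\big((\mathbf{x}_i-\mathbf{x}_j)/h\big)$; $\nabla_{\mathbf{x}_i}L_h$ is the partial gradient with respect to $\mathbf{x}_i$, and for the full gradient we use the norm $\|\nabla L_h(\mathcal{X})\|_{\max}=\max_{i\in[n]}\|\nabla_{\mathbf{x}_i}L_h(\mathcal{X})\|$. Mean-shift operator: $\mathcal{S}_h(x;\mathcal{X})=\sum_i G((x-\mathbf{x}_i)/h)\mathbf{x}_i\big/\sum_i G((x-\mathbf{x}_i)/h)$. DSMS process: for $k=0,1,2,\ldots$: if $k\ge1$, set $\delta_k=\min\{\nu_k,\ (h_k/h_{min})^2-1,\ 1-(h_k/h_{max})^2\}$, draw $\alpha_k$ uniformly on $(1-\delta_k,1+\delta_k)$ (with $\alpha_k=1$ if $\delta_k=0$), and set $h_{k+1}=h_k/\sqrt{\alpha_k}$; draw $i_k$ uniformly from $\{1,\ldots,n\}$; set $\mathbf{x}_{i_k}^{(k+1)}=\mathcal{S}_{h_{k+1}}(\mathbf{x}_{i_k}^{(k)};\mathcal{X}^{(k)})$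 and $\mathbf{x}_j^{(k+1)}=\mathbf{x}_j^{(k)}$ for $j\ne i_k$. The indices $i_k$ are i.i.d., each independent of all previous choices (in particular of $h_{k+1}$ and of the past), and $(i_k)$, $(h_k)$ are independent. *)

theory Defs
  imports "HOL-Analysis.Analysis" "HOL-Probability.Probability"
begin

definition profile :: "(real \<Rightarrow> real) \<Rightarrow> (real \<Rightarrow> real) \<Rightarrow> bool" where
  "profile kp kp' \<longleftrightarrow>
     (\<forall>t\<ge>0. kp t \<ge> 0) \<and>
     (\<forall>t\<ge>1. kp t = 0) \<and>
     (\<forall>t\<ge>0. (kp has_real_derivative kp' t) (at t within {0..})) \<and>
     continuous_on {0..} kp' \<and>
     (\<forall>s t. 0 \<le> s \<longrightarrow> s \<le> t \<longrightarrow> kp t \<le> kp s) \<and>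
     convex_on {0..} kp \<and>
     (\<forall>t. 0 \<le> t \<longrightarrow> t < 1 \<longrightarrow> kp' t < 0)"

definition kern :: "(real \<Rightarrow> real) \<Rightarrow> 'a::real_normed_vector \<Rightarrow> real" where
  "kern kp u = kp ((norm u)\<^sup>2)"

definition weight :: "(real \<Rightarrow> real) \<Rightarrow> 'a::real_normed_vector \<Rightarrow> real" where
  "weight kp' u = - kp' ((norm u)\<^sup>2)"

text \<open>States are maps nat => 'a; only the points with indices 0..<n matter
  (they represent x_1,...,x_n).\<close>
definition Lh :: "(real \<Rightarrow> real) \<Rightarrow> nat \<Rightarrow> real \<Rightarrow> (nat \<Rightarrow> 'a::real_normed_vector) \<Rightarrow> real" where
  "Lh kp n h X = (\<Sum>i<n. \<Sum>j\<in>{i..<n}. kern kp ((1/h) *\<^sub>R (X i - X j)))"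

definition pgrad :: "((nat \<Rightarrow> 'a::euclidean_space) \<Rightarrow> real) \<Rightarrow> (nat \<Rightarrow> 'a) \<Rightarrow> nat \<Rightarrow> 'a" where
  "pgrad L X i = (SOME g. ((\<lambda>y. L (X(i := y))) has_derivative (\<lambda>v. g \<bullet> v)) (at (X i)))"

definition grad_max :: "nat \<Rightarrow> ((nat \<Rightarrow> 'a::euclidean_space) \<Rightarrow> real) \<Rightarrow> (nat \<Rightarrow> 'a) \<Rightarrow> real" where
  "grad_max n L X = Max ((\<lambda>i. norm (pgrad L X i)) ` {0..<n})"

definition mean_shift :: "(real \<Rightarrow> real) \<Rightarrow> nat \<Rightarrow> real \<Rightarrow> 'a::real_normed_vector \<Rightarrow> (nat \<Rightarrow> 'a) \<Rightarrow> 'a" where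
  "mean_shift kp' n h x X =
     (1 / (\<Sum>i<n. weight kp' ((1/h) *\<^sub>R (x - X i)))) *\<^sub>R
       (\<Sum>i<n. weight kp' ((1/h) *\<^sub>R (x - X i)) *\<^sub>R X i)"

definition dsms_delta :: "real \<Rightarrow> real \<Rightarrow> real \<Rightarrow> real \<Rightarrow> real" where
  "dsms_delta nuk hmin hmax h = min nuk (min ((h/hmin)\<^sup>2 - 1) (1 - (h/hmax)\<^sup>2))"

text \<open>Bandwidth: dsms_bw ... k w = h_{k+1}(w). The randomness for alpha_k is realised as
  alpha_k = 1 + delta_k * U_k with U_k uniform on (-1,1) (so alpha_k is uniform on
  (1-delta_k, 1+delta_k), and alpha_k = 1 if delta_k = 0).\<close>
fun dsms_bw :: "(nat \<Rightarrow> real) \<Rightarrow> real \<Rightarrow> real \<Rightarrow> real \<Rightarrow> (nat \<Rightarrow> 'w \<Rightarrow> real) \<Rightarrow> nat \<Rightarrow> 'w \<Rightarrow> real" where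
  "dsms_bw nu hmin hmax h1 U 0 w = h1"
| "dsms_bw nu hmin hmax h1 U (Suc k) w =
     dsms_bw nu hmin hmax h1 U k w /
       sqrt (1 + dsms_delta (nu (Suc k)) hmin hmax (dsms_bw nu hmin hmax h1 U k w) * U (Suc k) w)"

fun dsms_state :: "(real \<Rightarrow> real) \<Rightarrow> nat \<Rightarrow> (nat \<Rightarrow> real) \<Rightarrow> real \<Rightarrow> real \<Rightarrow> real \<Rightarrow>
    (nat \<Rightarrow> 'a::real_normed_vector) \<Rightarrow> (nat \<Rightarrow> 'w \<Rightarrow> real) \<Rightarrow> (nat \<Rightarrow> 'w \<Rightarrow> nat) \<Rightarrow>
    nat \<Rightarrow> 'w \<Rightarrow> (nat \<Rightarrow> 'a)" where
  "dsms_state kp' n nu hmin hmax h1 X0 U I 0 w = X0"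
| "dsms_state kp' n nu hmin hmax h1 X0 U I (Suc k) w =
     (let X = dsms_state kp' n nu hmin hmax h1 X0 U I k w;
          i = I k w
      in X(i := mean_shift kp' n (dsms_bw nu hmin hmax h1 U k w) (X i) X))"

text \<open>Successive hitting times of a predicate hit :: nat => bool.
  hit_time hit (Suc p) = T_{p+1}; by convention hit_time hit 0 = 0 (T_0 is not
  defined in the paper; the convention only makes the event T_0 < inf the whole space).\<close>
fun hit_time :: "(nat \<Rightarrow> bool) \<Rightarrow> nat \<Rightarrow> enat" where
  "hit_time hit 0 = 0"
| "hit_time hit (Suc 0) = (if \<exists>k. hit k then enat (LEAST k. hit k) else \<infinity>)"
| "hit_time hit (Suc (Suc p)) =
     (case hit_time hit (Suc p) of
        \<infinity> \<Rightarrow> \<infinity>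
      | enat m \<Rightarrow> (if \<exists>k>m. hit k then enat (LEAST k. m < k \<and> hit k) else \<infinity>))"

end

theory Submission
  imports Defs
begin

lemma grad_rep:
  fixes D :: "'a::euclidean_space \<Rightarrow> real"
  assumes "linear D"
  shows "D = (\<lambda>v. (\<Sum>b\<in>Basis. D b *\<^sub>R b) \<bullet> v)"
proof
  fix v :: 'a
  have "D v = D (\<Sum>b\<in>Basis. (v \<bullet> b) *\<^sub>R b)" by (simp add: euclidean_representation)
  also have "\<dots> = (\<Sum>b\<in>Basis. (v \<bullet> b) * D b)"
    using assms by (simp add: linear_sum linear_scale)
  also have "\<dots> = (\<Sum>b\<in>Basis. D b *\<^sub>R b) \<bullet> v"
    by (simp add: inner_sum_left inner_sum_right inner_commute mult.commute)
  finally show "D v = (\<Sum>b\<in>Basis. D b *\<^sub>R b) \<bullet> v" .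
qed

lemma kern_diff:
  assumes "profile kp kp'"
  shows "(kern kp :: 'a::euclidean_space \<Rightarrow> real) differentiable (at u)"
proof -
  have d1: "((\<lambda>u::'a. u \<bullet> u) has_derivative (\<lambda>h. u \<bullet> h + h \<bullet> u)) (at u)"
    by (rule has_derivative_inner[OF has_derivative_ident has_derivative_ident])
  have "(kp has_real_derivative kp' (u \<bullet> u)) (at (u \<bullet> u) within {0..})"
    using assms unfolding profile_def by simp
  then have d2: "(kp has_derivative (*) (kp' (u \<bullet> u))) (at (u \<bullet> u) within (\<lambda>u::'a. u \<bullet> u) ` UNIV)"
    unfolding has_field_derivative_def
    by (rule has_derivative_subset) auto
  from has_derivative_in_compose[OF d1 d2] have "(\<lambda>u::'a. kp (u \<bullet> u)) differentiable (at u)"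
    unfolding differentiable_def by auto
  moreover have "kern kp = (\<lambda>u::'a. kp (u \<bullet> u))"
    by (auto simp: kern_def power2_norm_eq_inner)
  ultimately show ?thesis by simp
qed

lemma kern_cont:
  assumes "profile kp kp'"
  shows "continuous_on UNIV (kern kp :: 'a::euclidean_space \<Rightarrow> real)"
  using kern_diff[OF assms] by (intro differentiable_imp_continuous_on differentiable_at_imp_differentiable_on) auto

lemma weight_cont:
  assumes "profile kp kp'"
  shows "continuous_on UNIV (weight kp' :: 'a::euclidean_space \<Rightarrow> real)"
proof -
  have c: "continuous_on {0..} kp'" using assms unfolding profile_def by simp
  have "continuous_on UNIV (\<lambda>u::'a. kp' ((norm u)\<^sup>2))"
    by (rule continuous_on_compose2[OF c]) (auto intro!: continuous_intros)
  then show ?thesis unfolding weight_def[abs_def] by (intro continuous_intros)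
qed

lemma upd_diff:
  "(\<lambda>y. (X(i := y)) a) differentiable (at y0)"
  by (cases "a = i") auto

lemma term_diff:
  assumes "profile kp kp'"
  shows "(\<lambda>y. kern kp ((1 / h) *\<^sub>R (((X::nat \<Rightarrow> 'a::euclidean_space)(i := y)) a - (X(i := y)) c))) differentiable (at y0)"
proof -
  have "(\<lambda>y. (1 / h) *\<^sub>R ((X(i := y)) a - (X(i := y)) c)) differentiable (at y0)"
    by (intro differentiable_scaleR differentiable_diff upd_diff differentiable_const)
  from differentiable_chain_at[OF this kern_diff[OF assms]] show ?thesis by (simp add: o_def)
qed

lemma L_diff:
  assumes "profile kp kp'"
  shows "(\<lambda>y. Lh kp n h ((X::nat \<Rightarrow> 'a::euclidean_space)(i := y))) differentiable (at y0)"
  unfolding Lh_def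
  by (intro differentiable_sum ballI finite_lessThan finite_atLeastLessThan term_diff[OF assms])

lemma pgrad_deriv:
  assumes "profile kp kp'"
  shows "((\<lambda>y. Lh kp n h (X(i := y))) has_derivative (\<lambda>v. pgrad (Lh kp n h) (X::nat \<Rightarrow> 'a::euclidean_space) i \<bullet> v)) (at (X i))"
proof -
  obtain D where D: "((\<lambda>y. Lh kp n h (X(i := y))) has_derivative D) (at (X i))"
    using L_diff[OF assms, of n h X i "X i"] unfolding differentiable_def by blast
  then have "linear D" using has_derivative_linear by blast
  then have "D = (\<lambda>v. (\<Sum>b\<in>Basis. D b *\<^sub>R b) \<bullet> v)" by (rule grad_rep)
  with D have "\<exists>g. ((\<lambda>y. Lh kp n h (X(i := y))) has_derivative (\<lambda>v. g \<bullet> v)) (at (X i))" by metis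
  then show ?thesis unfolding pgrad_def by (rule someI_ex)
qed

lemma dir_limit:
  fixes f :: "'a::euclidean_space \<Rightarrow> real"
  assumes "(f has_derivative (\<lambda>v. g \<bullet> v)) (at x)"
  shows "(\<lambda>m. real (Suc m) * (f (x + inverse (real (Suc m)) *\<^sub>R b) - f x)) \<longlonglongrightarrow> g \<bullet> b"
proof -
  have l: "((\<lambda>t::real. x + t *\<^sub>R b) has_derivative (\<lambda>t. t *\<^sub>R b)) (at 0)"
    by (auto intro!: derivative_eq_intros)
  have "((\<lambda>t. f (x + t *\<^sub>R b)) has_derivative (\<lambda>t. g \<bullet> (t *\<^sub>R b))) (at 0)"
  proof -
    have a: "(f has_derivative (\<lambda>v. g \<bullet> v)) (at (x + 0 *\<^sub>R b))" using assms by simp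
    show ?thesis using has_derivative_compose[OF l a] by simp
  qed
  then have "((\<lambda>t. f (x + t *\<^sub>R b)) has_real_derivative (g \<bullet> b)) (at 0)"
    unfolding has_field_derivative_def
    by (subgoal_tac "(\<lambda>t. t * (g \<bullet> b)) = (*) (g \<bullet> b)") (auto simp: fun_eq_iff)
  then have "((\<lambda>t. (f (x + t *\<^sub>R b) - f x) / t) \<longlongrightarrow> g \<bullet> b) (at 0)"
    unfolding DERIV_def by simp
  then have "((\<lambda>t. (f (x + t *\<^sub>R b) - f x) / t) \<circ> (\<lambda>m. inverse (real (Suc m)))) \<longlonglongrightarrow> g \<bullet> b"
    unfolding tendsto_at_iff_sequentially using LIMSEQ_inverse_real_of_nat by auto
  then show ?thesis by (simp add: o_def divide_inverse mult.commute)
qed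


lemma count_meas:
  assumes "(\<lambda>w. real (f w :: nat)) \<in> borel_measurable N"
  shows "f \<in> N \<rightarrow>\<^sub>M count_space UNIV"
proof -
  have "f -` {a} \<inter> space N \<in> sets N" for a
  proof -
    have "f -` {a} \<inter> space N = (\<lambda>w. real (f w)) -` {real a} \<inter> space N" by auto
    also have "\<dots> \<in> sets N" using assms by (rule measurable_sets) auto
    finally show ?thesis .
  qed
  then show ?thesis by (auto simp: measurable_count_space_eq2_countable)
qed

lemma upd_meas:
  fixes Y :: "'w \<Rightarrow> nat \<Rightarrow> 'a::euclidean_space"
  assumes Y: "\<And>j. (\<lambda>w. Y w j) \<in> borel_measurable N"
    and z: "z \<in> borel_measurable N"
    and i: "i \<in> N \<rightarrow>\<^sub>M count_space UNIV"
  shows "(\<lambda>w. ((Y w)(i w := z w)) a) \<in> borel_measurable N"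
proof -
  have "{w \<in> space N. i w = a} \<in> sets N"
    using measurable_sets[OF i, of "{a}"] by (simp add: vimage_def Int_def conj_commute)
  then have "(\<lambda>w. if i w = a then z w else Y w a) \<in> borel_measurable N"
    by (intro measurable_If[where P="\<lambda>w. i w = a"]) (auto simp: Y z)
  then show ?thesis by (simp add: fun_upd_def eq_commute)
qed

lemma Lupd_meas:
  fixes Y :: "'w \<Rightarrow> nat \<Rightarrow> 'a::euclidean_space"
  assumes prof: "profile kp kp'"
    and h: "h \<in> borel_measurable N"
    and Y: "\<And>j. (\<lambda>w. Y w j) \<in> borel_measurable N"
    and z: "z \<in> borel_measurable N"
    and i: "i \<in> N \<rightarrow>\<^sub>M count_space UNIV"
  shows "(\<lambda>w. Lh kp n (h w) ((Y w)(i w := z w))) \<in> borel_measurable N"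
  unfolding Lh_def
proof (intro borel_measurable_sum)
  fix a c
  have k: "kern kp \<in> borel_measurable (borel :: 'a measure)"
    by (rule borel_measurable_continuous_onI[OF kern_cont[OF prof]])
  have "(\<lambda>w. (1 / h w) *\<^sub>R (((Y w)(i w := z w)) a - ((Y w)(i w := z w)) c)) \<in> borel_measurable N"
    using upd_meas[OF Y z i] h by measurable
  from measurable_compose[OF this k]
  show "(\<lambda>w. kern kp ((1 / h w) *\<^sub>R (((Y w)(i w := z w)) a - ((Y w)(i w := z w)) c))) \<in> borel_measurable N" .
qed

lemma pgrad_meas:
  fixes Y :: "'w \<Rightarrow> nat \<Rightarrow> 'a::euclidean_space"
  assumes prof: "profile kp kp'"
    and h: "h \<in> borel_measurable N"
    and Y: "\<And>j. (\<lambda>w. Y w j) \<in> borel_measurable N"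
    and i: "i \<in> N \<rightarrow>\<^sub>M count_space UNIV"
  shows "(\<lambda>w. pgrad (Lh kp n (h w)) (Y w) (i w)) \<in> borel_measurable N"
proof -
  have Yi: "(\<lambda>w. Y w (i w)) \<in> borel_measurable N"
    by (rule measurable_compose_countable[OF Y i])
  have comp: "(\<lambda>w. pgrad (Lh kp n (h w)) (Y w) (i w) \<bullet> b) \<in> borel_measurable N" for b
  proof (rule borel_measurable_LIMSEQ_real)
    fix w
    show "(\<lambda>m. real (Suc m) * (Lh kp n (h w) ((Y w)(i w := Y w (i w) + inverse (real (Suc m)) *\<^sub>R b)) - Lh kp n (h w) ((Y w)(i w := Y w (i w)))))
       \<longlonglongrightarrow> pgrad (Lh kp n (h w)) (Y w) (i w) \<bullet> b"
      by (rule dir_limit[OF pgrad_deriv[OF prof]])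
  next
    fix m
    have z: "(\<lambda>w. Y w (i w) + inverse (real (Suc m)) *\<^sub>R b) \<in> borel_measurable N"
      using Yi by measurable
    show "(\<lambda>w. real (Suc m) * (Lh kp n (h w) ((Y w)(i w := Y w (i w) + inverse (real (Suc m)) *\<^sub>R b)) - Lh kp n (h w) ((Y w)(i w := Y w (i w))))) \<in> borel_measurable N"
      using Lupd_meas[OF prof h Y z i] Lupd_meas[OF prof h Y Yi i] by measurable
  qed
  have "(\<lambda>w. \<Sum>b\<in>Basis. (pgrad (Lh kp n (h w)) (Y w) (i w) \<bullet> b) *\<^sub>R b) \<in> borel_measurable N"
    using comp by (intro borel_measurable_sum borel_measurable_scaleR) auto
  then show ?thesis by (simp add: euclidean_representation)
qed


lemma dyn_meas:
  fixes X0 :: "nat \<Rightarrow> 'a::euclidean_space"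
  assumes prof: "profile kp kp'"
    and U: "\<And>j. j \<le> K \<Longrightarrow> U j \<in> borel_measurable N"
    and I: "\<And>j. j < K \<Longrightarrow> I j \<in> N \<rightarrow>\<^sub>M count_space UNIV"
  shows "k \<le> K \<Longrightarrow> dsms_bw nu hmin hmax h1 U k \<in> borel_measurable N \<and>
     (\<forall>a. (\<lambda>w. dsms_state kp' n nu hmin hmax h1 X0 U I k w a) \<in> borel_measurable N)"
proof (induction k)
  case 0
  then show ?case by simp
next
  case (Suc k)
  then have IH: "dsms_bw nu hmin hmax h1 U k \<in> borel_measurable N"
    "\<And>a. (\<lambda>w. dsms_state kp' n nu hmin hmax h1 X0 U I k w a) \<in> borel_measurable N"
    by auto
  have Us: "U (Suc k) \<in> borel_measurable N" using U Suc by simp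
  have Ik: "I k \<in> N \<rightarrow>\<^sub>M count_space UNIV" using I Suc by simp
  have bw: "dsms_bw nu hmin hmax h1 U (Suc k) \<in> borel_measurable N"
    using IH(1) Us unfolding dsms_bw.simps dsms_delta_def by measurable
  have wm: "weight kp' \<in> borel_measurable (borel :: 'a measure)"
    by (rule borel_measurable_continuous_onI[OF weight_cont[OF prof]])
  let ?S = "\<lambda>w. dsms_state kp' n nu hmin hmax h1 X0 U I k w"
  have Si: "(\<lambda>w. ?S w (I k w)) \<in> borel_measurable N"
    by (rule measurable_compose_countable[OF IH(2) Ik])
  have wj: "(\<lambda>w. weight kp' ((1 / dsms_bw nu hmin hmax h1 U k w) *\<^sub>R (?S w (I k w) - ?S w j))) \<in> borel_measurable N" for j
    by (rule measurable_compose[OF _ wm]) (use IH Si in measurable)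
  have ms: "(\<lambda>w. mean_shift kp' n (dsms_bw nu hmin hmax h1 U k w) (?S w (I k w)) (?S w)) \<in> borel_measurable N"
    unfolding mean_shift_def using wj IH(2)
    by (intro borel_measurable_scaleR borel_measurable_sum borel_measurable_divide borel_measurable_const) auto
  have "(\<lambda>w. ((?S w)(I k w := mean_shift kp' n (dsms_bw nu hmin hmax h1 U k w) (?S w (I k w)) (?S w))) a) \<in> borel_measurable N" for a
    by (rule upd_meas[OF IH(2) ms Ik])
  then show ?case using bw unfolding dsms_state.simps Let_def by blast
qed

lemma card_insert_below:
  assumes "hit m"
  shows "{k. k < Suc m \<and> hit k} = insert m {k. k < m \<and> hit k}"
  using assms by (auto simp: less_Suc_eq)

lemma hit_aux:
  "(hit_time hit (Suc q) = enat m \<longrightarrow> hit m \<and> card {k. k < m \<and> hit k} = q) \<and>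
   (hit_time hit (Suc q) = \<infinity> \<longrightarrow> (\<forall>N. card {k. k < N \<and> hit k} \<le> q))"
proof (induction q arbitrary: m)
  case 0
  show ?case
  proof (cases "\<exists>k. hit k")
    case True
    have "hit (LEAST k. hit k)" using True by (rule LeastI_ex)
    moreover have "{k. k < (LEAST k. hit k) \<and> hit k} = {}" using not_less_Least by blast
    ultimately show ?thesis using True by auto
  next
    case False
    then show ?thesis by auto
  qed
next
  case (Suc q)
  show ?case
  proof (cases "hit_time hit (Suc q)")
    case (enat m0)
    with Suc.IH have ih: "hit m0" "card {k. k < m0 \<and> hit k} = q" by auto
    have fin: "finite {k. k < m0 \<and> hit k}" by simp
    show ?thesis
    proof (cases "\<exists>k>m0. hit k")
      case True
      let ?m = "LEAST k. m0 < k \<and> hit k"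
      have m: "m0 < ?m \<and> hit ?m" using True by (metis (mono_tags, lifting) LeastI_ex)
      have "{k. k < ?m \<and> hit k} = insert m0 {k. k < m0 \<and> hit k}"
      proof (intro set_eqI iffI)
        fix k assume k: "k \<in> {k. k < ?m \<and> hit k}"
        then have "\<not> (m0 < k)" using not_less_Least[of k "\<lambda>k. m0 < k \<and> hit k"] by auto
        with k show "k \<in> insert m0 {k. k < m0 \<and> hit k}" by auto
      next
        fix k assume "k \<in> insert m0 {k. k < m0 \<and> hit k}"
        then show "k \<in> {k. k < ?m \<and> hit k}" using m ih by auto
      qed
      then have "card {k. k < ?m \<and> hit k} = Suc q" using ih fin by simp
      then show ?thesis using enat True m by auto
    next
      case False
      have "card {k. k < N \<and> hit k} \<le> Suc q" for N
      proof -
        have "{k. k < N \<and> hit k} \<subseteq> insert m0 {k. k < m0 \<and> hit k}"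
          using False by (auto simp: not_less_iff_gr_or_eq)
        then have "card {k. k < N \<and> hit k} \<le> card (insert m0 {k. k < m0 \<and> hit k})"
          by (intro card_mono) auto
        also have "\<dots> \<le> Suc q" using ih fin by (simp add: card_insert_if)
        finally show ?thesis .
      qed
      then show ?thesis using enat False by auto
    qed
  next
    case infinity
    with Suc.IH have "\<forall>N. card {k. k < N \<and> hit k} \<le> q" by auto
    then show ?thesis using infinity by (auto intro: le_SucI)
  qed
qed

lemma hit_time_fin:
  "hit_time hit q \<noteq> \<infinity> \<longleftrightarrow> (\<exists>N. q \<le> card {k. k < N \<and> hit k})"
proof (cases q)
  case 0
  then show ?thesis by (simp add: zero_enat_def)
next
  case (Suc q')
  show ?thesis
  proof
    assume "hit_time hit q \<noteq> \<infinity>"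
    then obtain m where m: "hit_time hit (Suc q') = enat m" using Suc by auto
    then have "hit m" "card {k. k < m \<and> hit k} = q'" using hit_aux by blast+
    then have "card {k. k < Suc m \<and> hit k} = Suc q'"
      by (simp add: card_insert_below)
    then show "\<exists>N. q \<le> card {k. k < N \<and> hit k}" using Suc by (intro exI[of _ "Suc m"]) simp
  next
    assume "\<exists>N. q \<le> card {k. k < N \<and> hit k}"
    then obtain N where N: "q \<le> card {k. k < N \<and> hit k}" by blast
    show "hit_time hit q \<noteq> \<infinity>"
    proof
      assume "hit_time hit q = \<infinity>"
      then have "card {k. k < N \<and> hit k} \<le> q'" using hit_aux[of hit q'] Suc by blast
      with N Suc show False by simp
    qed
  qed
qed

lemma hit_time_fin':
  "hit_time hit q < \<infinity> \<longleftrightarrow> (\<exists>N. q \<le> card {k. k < N \<and> hit k})"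
  using hit_time_fin[of hit q] by (cases "hit_time hit q") auto

fun qual :: "(nat \<Rightarrow> bool) \<Rightarrow> (nat \<Rightarrow> bool) \<Rightarrow> nat \<Rightarrow> nat \<Rightarrow> nat \<Rightarrow> bool" where
  "qual hit good p k 0 = (p = 0)"
| "qual hit good p k (Suc d) = (if hit k then good k \<and> qual hit good (p - 1) (Suc k) d else qual hit good p (Suc k) d)"

lemma qual_card:
  assumes "\<forall>k\<ge>k1. good k"
  shows "qual hit good p k1 d \<longleftrightarrow> p \<le> card {k. k1 \<le> k \<and> k < k1 + d \<and> hit k}"
  using assms
proof (induction d arbitrary: p k1)
  case 0
  have e: "{k. k1 \<le> k \<and> k < k1 + 0 \<and> hit k} = {}" by auto
  show ?case by (simp only: e qual.simps card.empty) simp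
next
  case (Suc d)
  have IH: "qual hit good p' (Suc k1) d \<longleftrightarrow> p' \<le> card {k. Suc k1 \<le> k \<and> k < Suc k1 + d \<and> hit k}" for p'
    using Suc by auto
  have fin: "finite {k. Suc k1 \<le> k \<and> k < Suc k1 + d \<and> hit k}" by simp
  show ?case
  proof (cases "hit k1")
    case True
    have "{k. k1 \<le> k \<and> k < k1 + Suc d \<and> hit k} = insert k1 {k. Suc k1 \<le> k \<and> k < Suc k1 + d \<and> hit k}"
      using True by auto
    then have c: "card {k. k1 \<le> k \<and> k < k1 + Suc d \<and> hit k} = Suc (card {k. Suc k1 \<le> k \<and> k < Suc k1 + d \<and> hit k})"
      using fin by simp
    show ?thesis using True Suc.prems IH c by auto
  next
    case False
    have "{k. k1 \<le> k \<and> k < k1 + Suc d \<and> hit k} = {k. Suc k1 \<le> k \<and> k < Suc k1 + d \<and> hit k}"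
      using False by (auto simp: le_eq_less_or_eq)
    then show ?thesis using False IH by simp
  qed
qed

lemma (in prob_space) key_bound:
  fixes g :: "nat \<Rightarrow> 'a \<Rightarrow> real" and Ik :: "'a \<Rightarrow> nat"
  assumes n: "n \<ge> 1"
    and rng: "\<forall>w\<in>space M. Ik w < n"
    and C: "C \<in> events"
    and D: "\<And>m. m < n \<Longrightarrow> C \<inter> {w\<in>space M. \<epsilon> \<le> g m w \<and> (\<forall>j<m. g j w < \<epsilon>)} \<in> events"
    and Iev: "\<And>m. {w\<in>space M. Ik w = m} \<in> events"
    and ind: "\<And>m. m < n \<Longrightarrow> prob (C \<inter> {w\<in>space M. \<epsilon> \<le> g m w \<and> (\<forall>j<m. g j w < \<epsilon>)} \<inter> {w\<in>space M. Ik w = m})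
               = prob (C \<inter> {w\<in>space M. \<epsilon> \<le> g m w \<and> (\<forall>j<m. g j w < \<epsilon>)}) / n"
  shows "prob (C \<inter> {w\<in>space M. (\<exists>j<n. \<epsilon> \<le> g j w) \<and> g (Ik w) w < \<epsilon>})
      \<le> (1 - 1 / n) * prob (C \<inter> {w\<in>space M. \<exists>j<n. \<epsilon> \<le> g j w})"
proof -
  define D where "D m = C \<inter> {w\<in>space M. \<epsilon> \<le> g m w \<and> (\<forall>j<m. g j w < \<epsilon>)}" for m
  define Q where "Q m = {w\<in>space M. Ik w = m}" for m
  have Dev: "m < n \<Longrightarrow> D m \<in> events" for m using D by (simp add: D_def)
  have hitU: "C \<inter> {w\<in>space M. \<exists>j<n. \<epsilon> \<le> g j w} = (\<Union>m\<in>{..<n}. D m)"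
  proof (intro set_eqI iffI)
    fix w assume w: "w \<in> C \<inter> {w\<in>space M. \<exists>j<n. \<epsilon> \<le> g j w}"
    then have ex: "\<exists>j. j < n \<and> \<epsilon> \<le> g j w" by auto
    define m where "m = (LEAST j. j < n \<and> \<epsilon> \<le> g j w)"
    have m: "m < n \<and> \<epsilon> \<le> g m w" unfolding m_def by (rule LeastI_ex[OF ex])
    have "\<forall>j<m. g j w < \<epsilon>"
    proof (intro allI impI)
      fix j assume "j < m"
      then have "\<not> (j < n \<and> \<epsilon> \<le> g j w)" unfolding m_def by (rule not_less_Least)
      with \<open>j < m\<close> m show "g j w < \<epsilon>" by auto
    qed
    with m w show "w \<in> (\<Union>m\<in>{..<n}. D m)" by (auto simp: D_def)
  qed (auto simp: D_def)
  have disj: "disjoint_family_on D {..<n}"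
    unfolding disjoint_family_on_def D_def
    by (auto, metis linorder_neqE_nat not_less)
  have sumD: "prob (C \<inter> {w\<in>space M. \<exists>j<n. \<epsilon> \<le> g j w}) = (\<Sum>m<n. prob (D m))"
    unfolding hitU by (rule finite_measure_finite_Union) (use Dev disj in auto)
  have sub: "C \<inter> {w\<in>space M. (\<exists>j<n. \<epsilon> \<le> g j w) \<and> g (Ik w) w < \<epsilon>} \<subseteq> (\<Union>m\<in>{..<n}. D m - Q m)"
  proof
    fix w assume w: "w \<in> C \<inter> {w\<in>space M. (\<exists>j<n. \<epsilon> \<le> g j w) \<and> g (Ik w) w < \<epsilon>}"
    then have "w \<in> (\<Union>m\<in>{..<n}. D m)" using hitU by blast
    then obtain m where m: "m < n" "w \<in> D m" by auto
    then have "Ik w \<noteq> m" using w by (auto simp: D_def)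
    with m show "w \<in> (\<Union>m\<in>{..<n}. D m - Q m)" by (auto simp: Q_def)
  qed
  have "prob (C \<inter> {w\<in>space M. (\<exists>j<n. \<epsilon> \<le> g j w) \<and> g (Ik w) w < \<epsilon>}) \<le> prob (\<Union>m\<in>{..<n}. D m - Q m)"
    by (rule finite_measure_mono[OF sub]) (use Dev Iev in \<open>auto simp: Q_def\<close>)
  also have "\<dots> \<le> (\<Sum>m<n. prob (D m - Q m))"
    by (rule finite_measure_subadditive_finite) (use Dev Iev in \<open>auto simp: Q_def\<close>)
  also have "\<dots> = (\<Sum>m<n. (1 - 1 / n) * prob (D m))"
  proof (rule sum.cong[OF refl])
    fix m assume "m \<in> {..<n}"
    then have mn: "m < n" by simp
    have "prob (D m - Q m) = prob (D m - (D m \<inter> Q m))" by (simp add: Diff_Int)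
    also have "\<dots> = prob (D m) - prob (D m \<inter> Q m)"
      by (rule finite_measure_Diff) (use Dev[OF mn] Iev in \<open>auto simp: Q_def\<close>)
    also have "prob (D m \<inter> Q m) = prob (D m) / n" using ind[OF mn] by (simp add: D_def Q_def)
    finally show "prob (D m - Q m) = (1 - 1 / n) * prob (D m)" by (simp add: algebra_simps)
  qed
  also have "\<dots> = (1 - 1 / n) * prob (C \<inter> {w\<in>space M. \<exists>j<n. \<epsilon> \<le> g j w})"
    by (simp add: sumD sum_distrib_left)
  finally show ?thesis .
qed

lemma (in prob_space) qual_bound:
  fixes F :: "nat \<Rightarrow> 'a measure" and hit good :: "nat \<Rightarrow> 'a \<Rightarrow> bool" and r :: real
  assumes sp: "\<And>k. space (F k) = space M"
    and sub: "\<And>k. sets (F k) \<subseteq> events"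
    and mono: "\<And>k. sets (F k) \<subseteq> sets (F (Suc k))"
    and H: "\<And>k. {w\<in>space M. hit k w} \<in> sets (F k)"
    and HG: "\<And>k. {w\<in>space M. hit k w \<and> good k w} \<in> sets (F (Suc k))"
    and key: "\<And>k C. C \<in> sets (F k) \<Longrightarrow> prob (C \<inter> {w\<in>space M. hit k w \<and> good k w}) \<le> r * prob (C \<inter> {w\<in>space M. hit k w})"
    and r: "0 \<le> r" "r \<le> 1"
  shows "C \<in> sets (F k) \<Longrightarrow> {w\<in>space M. qual (\<lambda>j. hit j w) (\<lambda>j. good j w) p k d} \<in> events \<and>
     prob (C \<inter> {w\<in>space M. qual (\<lambda>j. hit j w) (\<lambda>j. good j w) p k d}) \<le> r ^ p * prob C"
proof (induction d arbitrary: p k C)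
  case 0
  have Cev: "C \<in> events" using 0 sub by blast
  then have "C \<subseteq> space M" by (rule sets.sets_into_space)
  then show ?case using Cev r by (cases p) (auto simp: Int_absorb2 intro!: mult_nonneg_nonneg zero_le_power)
next
  case (Suc d)
  let ?Q = "\<lambda>p k d. {w\<in>space M. qual (\<lambda>j. hit j w) (\<lambda>j. good j w) p k d}"
  let ?H = "{w\<in>space M. hit k w}"
  let ?HG = "{w\<in>space M. hit k w \<and> good k w}"
  have C1: "C \<in> sets (F (Suc k))" using Suc.prems mono by blast
  have Cev: "C \<in> events" using Suc.prems sub by blast
  have Hev: "?H \<in> events" using H sub by blast
  have HGev: "?HG \<in> events" using HG sub by blast
  have CHG: "C \<inter> ?HG \<in> sets (F (Suc k))" using C1 HG by (rule sets.Int)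
  have H1: "?H \<in> sets (F (Suc k))" using H mono by blast
  have CH: "C - ?H \<in> sets (F (Suc k))" using C1 H1 by (rule sets.Diff)
  from Suc.IH[OF CHG, of "p - 1"] have IH1:
    "?Q (p - 1) (Suc k) d \<in> events" "prob (C \<inter> ?HG \<inter> ?Q (p - 1) (Suc k) d) \<le> r ^ (p - 1) * prob (C \<inter> ?HG)" by auto
  from Suc.IH[OF CH, of p] have IH2:
    "?Q p (Suc k) d \<in> events" "prob ((C - ?H) \<inter> ?Q p (Suc k) d) \<le> r ^ p * prob (C - ?H)" by auto
  have eq: "?Q p k (Suc d) = (?HG \<inter> ?Q (p - 1) (Suc k) d) \<union> ((space M - ?H) \<inter> ?Q p (Suc k) d)"
    by auto
  have Qev: "?Q p k (Suc d) \<in> events" unfolding eq using IH1 IH2 HGev Hev by auto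
  have CQ: "C \<inter> ?Q p k (Suc d) = (C \<inter> ?HG \<inter> ?Q (p - 1) (Suc k) d) \<union> ((C - ?H) \<inter> ?Q p (Suc k) d)"
    unfolding eq using sets.sets_into_space[OF Cev] by blast
  have split: "prob (C - ?H) = prob C - prob (C \<inter> ?H)"
    using finite_measure_Diff[of C "C \<inter> ?H"] Cev Hev by (simp add: Diff_Int)
  have mHG: "prob (C \<inter> ?HG) \<le> prob (C \<inter> ?H)"
    by (rule finite_measure_mono) (use Cev Hev in auto)
  have "prob (C \<inter> ?Q p k (Suc d)) \<le> prob (C \<inter> ?HG \<inter> ?Q (p - 1) (Suc k) d) + prob ((C - ?H) \<inter> ?Q p (Suc k) d)"
    unfolding CQ by (rule measure_subadditive) (use Cev HGev Hev IH1 IH2 in auto)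
  also have "\<dots> \<le> r ^ (p - 1) * prob (C \<inter> ?HG) + r ^ p * prob (C - ?H)"
    using IH1(2) IH2(2) by linarith
  also have "\<dots> \<le> r ^ p * prob C"
  proof (cases p)
    case 0
    then show ?thesis using split mHG by simp
  next
    case (Suc p')
    have "prob (C \<inter> ?HG) \<le> r * prob (C \<inter> ?H)" using key[OF Suc.prems] .
    then have "r ^ p' * prob (C \<inter> ?HG) \<le> r ^ p' * (r * prob (C \<inter> ?H))"
      using r by (intro mult_left_mono) auto
    moreover have pc: "prob C = prob (C - ?H) + prob (C \<inter> ?H)" using split by simp
    ultimately show ?thesis using Suc by (subst pc) (simp add: algebra_simps)
  qed
  finally show ?case using Qev by simp
qed


lemma grad_max_ge:
  assumes "n \<ge> 1"
  shows "(\<epsilon> \<le> grad_max n L X) \<longleftrightarrow> (\<exists>j<n. \<epsilon> \<le> norm (pgrad L X j))"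
proof -
  have "finite ((\<lambda>i. norm (pgrad L X i)) ` {0..<n})" "(\<lambda>i. norm (pgrad L X i)) ` {0..<n} \<noteq> {}"
    using assms by auto
  then show ?thesis unfolding grad_max_def by (auto simp add: Max_ge_iff)
qed

lemma card_split_k0:
  "card {k. k < N \<and> hit k} \<le> k0 + card {k. k0 \<le> k \<and> k < k0 + N \<and> hit k}"
proof -
  have "{k. k < N \<and> hit k} \<subseteq> {..<k0} \<union> {k. k0 \<le> k \<and> k < k0 + N \<and> hit k}" by auto
  then have "card {k. k < N \<and> hit k} \<le> card ({..<k0} \<union> {k. k0 \<le> k \<and> k < k0 + N \<and> hit k})"
    by (intro card_mono) auto
  also have "\<dots> \<le> card {..<k0} + card {k. k0 \<le> k \<and> k < k0 + N \<and> hit k}" by (rule card_Un_le)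
  finally show ?thesis by simp
qed

lemma card_real_sum:
  "real (card {k. k < (N::nat) \<and> P k}) = (\<Sum>k<N. if P k then 1 else 0)"
proof (induction N)
  case 0 then show ?case by simp
next
  case (Suc N)
  have "{k. k < Suc N \<and> P k} = (if P N then insert N {k. k < N \<and> P k} else {k. k < N \<and> P k})"
    by (auto simp: less_Suc_eq)
  then show ?case using Suc by simp
qed

lemma ge_set:
  assumes "f \<in> borel_measurable N"
  shows "{w\<in>space N. (c::real) \<le> f w} \<in> sets N"
proof -
  have "f -` {c..} \<inter> space N \<in> sets N" using assms by (rule measurable_sets) simp
  moreover have "f -` {c..} \<inter> space N = {w\<in>space N. c \<le> f w}" by auto
  ultimately show ?thesis by metis
qed

lemma lt_set:
  assumes "f \<in> borel_measurable N"
  shows "{w\<in>space N. f w < (c::real)} \<in> sets N"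
proof -
  have "f -` {..<c} \<inter> space N \<in> sets N" using assms by (rule measurable_sets) simp
  moreover have "f -` {..<c} \<inter> space N = {w\<in>space N. f w < c}" by auto
  ultimately show ?thesis by metis
qed

lemma ex_ge_set:
  fixes n :: nat
  assumes "\<And>j. f j \<in> borel_measurable N"
  shows "{w\<in>space N. \<exists>j<n. (c::real) \<le> f j w} \<in> sets N"
proof -
  have "{w\<in>space N. \<exists>j\<in>{..<n}. c \<le> f j w} \<in> sets N"
    by (intro sets.sets_Collect_finite_Ex ge_set assms finite_lessThan)
  moreover have "{w\<in>space N. \<exists>j<n. c \<le> f j w} = {w\<in>space N. \<exists>j\<in>{..<n}. c \<le> f j w}" by auto
  ultimately show ?thesis by metis
qed

theorem lemma1:
  fixes M :: "'w measure"
    and kp kp' :: "real \<Rightarrow> real"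
    and n :: nat and hmin hmax h1 \<epsilon> :: real
    and nu :: "nat \<Rightarrow> real"
    and X0 :: "nat \<Rightarrow> 'a::euclidean_space"
    and U :: "nat \<Rightarrow> 'w \<Rightarrow> real"
    and I :: "nat \<Rightarrow> 'w \<Rightarrow> nat"
    and k0 p :: nat
  assumes "prob_space M"
    and "profile kp kp'"
    and "n \<ge> 1"
    and "0 < hmin" and "hmin < hmax"
    and "hmin \<le> h1" and "h1 \<le> hmax"
    and "\<forall>k. nu k \<ge> 0" and "nu \<longlonglongrightarrow> 0"
    and "\<epsilon> > 0"
    and indep: "prob_space.indep_vars M (\<lambda>_. borel)
                  (\<lambda>x. case x of Inl k \<Rightarrow> U k | Inr k \<Rightarrow> (\<lambda>w. real (I k w))) UNIV"
    and U_unif: "\<forall>k. distr M borel (U k) = uniform_measure lborel {-1<..<1}"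
    and I_range: "\<forall>k. \<forall>w\<in>space M. I k w < n"
    and I_unif: "\<forall>k j. j < n \<longrightarrow> measure M {w\<in>space M. I k w = j} = 1 / real n"
  defines "A \<equiv> {w\<in>space M. \<forall>k\<ge>k0.
               norm (pgrad (Lh kp n (dsms_bw nu hmin hmax h1 U k w)) (dsms_state kp' n nu hmin hmax h1 X0 U I k w) (I k w)) < \<epsilon>}"
    and "T \<equiv> (\<lambda>q w. hit_time (\<lambda>k. grad_max n (Lh kp n (dsms_bw nu hmin hmax h1 U k w)) (dsms_state kp' n nu hmin hmax h1 X0 U I k w) \<ge> \<epsilon>) q)"
  shows "{w\<in>space M. T (k0 + p) w < \<infinity>} \<inter> A \<in> sets M
    \<and> measure M ({w\<in>space M. T (k0 + p) w < \<infinity>} \<inter> A) \<le> (1 - 1 / real n) ^ p"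
proof -
  interpret prob_space M by fact
  note prof = assms(2)
  have n1: "n \<ge> 1" by fact
  define g where "g k j w = norm (pgrad (Lh kp n (dsms_bw nu hmin hmax h1 U k w)) (dsms_state kp' n nu hmin hmax h1 X0 U I k w) j)" for k j w
  define hit where "hit k w = (\<exists>j<n. \<epsilon> \<le> g k j w)" for k w
  define good where "good k w = (g k (I k w) w < \<epsilon>)" for k w
  define Xf where "Xf = (\<lambda>x. case x of Inl k \<Rightarrow> U k | Inr k \<Rightarrow> (\<lambda>w. real (I k w)))"
  define E where "E i = {Xf i -` B \<inter> space M | B. B \<in> sets (borel :: real measure)}" for i
  define J where "J k = Inl ` {..k} \<union> Inr ` {..<k}" for k :: nat
  define Fm where "Fm k = sigma (space M) (\<Union>i\<in>J k. E i)" for k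
  have ind2: "indep_sets E UNIV" and Xm: "\<And>i. Xf i \<in> borel_measurable M"
    using indep unfolding indep_vars_def2 Xf_def E_def by auto
  have Epow: "(\<Union>i\<in>J k. E i) \<subseteq> Pow (space M)" for k by (auto simp: E_def)
  have Eev: "(\<Union>i\<in>J k. E i) \<subseteq> events" for k
    using Xm by (auto simp: E_def intro!: measurable_sets)
  have setsF: "sets (Fm k) = sigma_sets (space M) (\<Union>i\<in>J k. E i)" for k
    unfolding Fm_def using Epow by (rule sets_measure_of)
  have spF: "space (Fm k) = space M" for k
    unfolding Fm_def using Epow by (rule space_measure_of)
  have Fsub: "sets (Fm k) \<subseteq> events" for k
    unfolding setsF by (rule sets.sigma_sets_subset[OF Eev])
  have Fmono: "sets (Fm k) \<subseteq> sets (Fm (Suc k))" for k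
    unfolding setsF J_def by (rule sigma_sets_mono') auto
  have gen: "i \<in> J K \<Longrightarrow> Xf i \<in> borel_measurable (Fm K)" for i K
  proof (rule measurableI)
    fix B :: "real set" assume "i \<in> J K" "B \<in> sets borel"
    then have "Xf i -` B \<inter> space M \<in> (\<Union>i\<in>J K. E i)" by (auto simp: E_def)
    then show "Xf i -` B \<inter> space (Fm K) \<in> sets (Fm K)"
      unfolding setsF spF by auto
  qed auto
  have UF: "j \<le> K \<Longrightarrow> U j \<in> borel_measurable (Fm K)" for j K
    using gen[of "Inl j" K] by (simp add: J_def Xf_def)
  have IF: "j < K \<Longrightarrow> I j \<in> Fm K \<rightarrow>\<^sub>M count_space UNIV" for j K
    using gen[of "Inr j" K] by (intro count_meas) (simp add: J_def Xf_def)
  have dyn: "k \<le> K \<Longrightarrow> dsms_bw nu hmin hmax h1 U k \<in> borel_measurable (Fm K) \<and>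
     (\<forall>a. (\<lambda>w. dsms_state kp' n nu hmin hmax h1 X0 U I k w a) \<in> borel_measurable (Fm K))" for k K
    by (rule dyn_meas[OF prof UF IF])
  have gF: "k \<le> K \<Longrightarrow> g k j \<in> borel_measurable (Fm K)" for k j K
  proof -
    assume "k \<le> K"
    with dyn have d: "dsms_bw nu hmin hmax h1 U k \<in> borel_measurable (Fm K)"
      "\<And>a. (\<lambda>w. dsms_state kp' n nu hmin hmax h1 X0 U I k w a) \<in> borel_measurable (Fm K)" by auto
    have "(\<lambda>w. pgrad (Lh kp n (dsms_bw nu hmin hmax h1 U k w)) (dsms_state kp' n nu hmin hmax h1 X0 U I k w) ((\<lambda>_. j) w)) \<in> borel_measurable (Fm K)"
      by (rule pgrad_meas[OF prof d]) simp
    then show ?thesis unfolding g_def[abs_def] by measurable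
  qed
  have goodF: "k < K \<Longrightarrow> (\<lambda>w. g k (I k w) w) \<in> borel_measurable (Fm K)" for k K
  proof -
    assume kK: "k < K"
    with dyn have d: "dsms_bw nu hmin hmax h1 U k \<in> borel_measurable (Fm K)"
      "\<And>a. (\<lambda>w. dsms_state kp' n nu hmin hmax h1 X0 U I k w a) \<in> borel_measurable (Fm K)" by auto
    have "(\<lambda>w. pgrad (Lh kp n (dsms_bw nu hmin hmax h1 U k w)) (dsms_state kp' n nu hmin hmax h1 X0 U I k w) (I k w)) \<in> borel_measurable (Fm K)"
      by (rule pgrad_meas[OF prof d IF[OF kK]])
    then show ?thesis unfolding g_def[abs_def] by measurable
  qed
  have Hset: "{w\<in>space M. hit k w} \<in> sets (Fm k)" for k
  proof -
    have "{w\<in>space (Fm k). \<exists>j<n. \<epsilon> \<le> g k j w} \<in> sets (Fm k)"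
      using gF[of k k] by (intro ex_ge_set) auto
    then show ?thesis unfolding spF hit_def .
  qed
  have HGset: "{w\<in>space M. hit k w \<and> good k w} \<in> sets (Fm (Suc k))" for k
  proof -
    have eqs: "{w\<in>space (Fm (Suc k)). (\<exists>j<n. \<epsilon> \<le> g k j w) \<and> g k (I k w) w < \<epsilon>} =
       {w\<in>space (Fm (Suc k)). \<exists>j<n. \<epsilon> \<le> g k j w} \<inter> {w\<in>space (Fm (Suc k)). g k (I k w) w < \<epsilon>}" by blast
    have "{w\<in>space (Fm (Suc k)). \<exists>j<n. \<epsilon> \<le> g k j w} \<inter> {w\<in>space (Fm (Suc k)). g k (I k w) w < \<epsilon>} \<in> sets (Fm (Suc k))"
      using gF[of k "Suc k"] goodF[of k "Suc k"] by (intro sets.Int ex_ge_set lt_set) auto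
    then have "{w\<in>space (Fm (Suc k)). (\<exists>j<n. \<epsilon> \<le> g k j w) \<and> g k (I k w) w < \<epsilon>} \<in> sets (Fm (Suc k))"
      unfolding eqs .
    then show ?thesis unfolding spF hit_def good_def .
  qed
  have goodM: "{w\<in>space M. good k w} \<in> events" for k
  proof -
    have "{w\<in>space (Fm (Suc k)). g k (I k w) w < \<epsilon>} \<in> sets (Fm (Suc k))"
      by (intro lt_set goodF) simp
    then show ?thesis using Fsub unfolding spF good_def by blast
  qed
  have HM: "{w\<in>space M. hit k w} \<in> events" for k using Hset Fsub by blast
  have indF: "C \<in> sets (Fm k) \<Longrightarrow> prob (C \<inter> {w\<in>space M. I k w = m}) = prob C * prob {w\<in>space M. I k w = m}" for C k m
  proof -
    assume C: "C \<in> sets (Fm k)"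
    define I' where "I' b = (if b then J k else {Inr k})" for b
    have "indep_sets (\<lambda>b. sigma_sets (space M) (\<Union>i\<in>I' b. E i)) UNIV"
    proof (rule indep_sets_collect_sigma)
      show "indep_sets E (\<Union>j\<in>UNIV. I' j)" by (rule indep_sets_mono_index[OF _ ind2]) auto
      show "Int_stable (E i)" for i
        unfolding Int_stable_def E_def
        by (auto, metis sets.Int vimage_Int Int_assoc Int_left_commute Int_absorb)
      show "disjoint_family_on I' UNIV"
        by (auto simp: disjoint_family_on_def I'_def J_def)
    qed
    moreover have "C \<in> sigma_sets (space M) (\<Union>i\<in>I' True. E i)" using C by (simp add: setsF I'_def)
    moreover have "{w\<in>space M. I k w = m} \<in> sigma_sets (space M) (\<Union>i\<in>I' False. E i)"
    proof -
      have "{w\<in>space M. I k w = m} = Xf (Inr k) -` {real m} \<inter> space M" by (auto simp: Xf_def)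
      then have "{w\<in>space M. I k w = m} \<in> E (Inr k)" unfolding E_def by auto
      then show ?thesis by (auto simp: I'_def)
    qed
    ultimately have "prob (\<Inter>b\<in>UNIV. (\<lambda>b. if b then C else {w\<in>space M. I k w = m}) b) = (\<Prod>b\<in>UNIV. prob ((\<lambda>b. if b then C else {w\<in>space M. I k w = m}) b))"
      by (intro indep_setsD) auto
    then show ?thesis by (simp add: UNIV_bool Int_commute)
  qed
  define r where "r = 1 - 1 / real n"
  have r: "0 \<le> r" "r \<le> 1" using n1 by (auto simp: r_def)
  have key: "prob (C \<inter> {w\<in>space M. hit k w \<and> good k w}) \<le> r * prob (C \<inter> {w\<in>space M. hit k w})"
    if C: "C \<in> sets (Fm k)" for k C
  proof -
    have Dset: "C \<inter> {w\<in>space M. \<epsilon> \<le> g k m w \<and> (\<forall>j<m. g k j w < \<epsilon>)} \<in> sets (Fm k)" for m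
    proof -
      have eqs: "{w\<in>space (Fm k). \<epsilon> \<le> g k m w \<and> (\<forall>j<m. g k j w < \<epsilon>)} =
         {w\<in>space (Fm k). \<epsilon> \<le> g k m w} - {w\<in>space (Fm k). \<exists>j<m. \<epsilon> \<le> g k j w}" by (auto simp: not_le)
      have "{w\<in>space (Fm k). \<epsilon> \<le> g k m w} - {w\<in>space (Fm k). \<exists>j<m. \<epsilon> \<le> g k j w} \<in> sets (Fm k)"
        using gF[of k k] by (intro sets.Diff ex_ge_set ge_set) auto
      then have "{w\<in>space (Fm k). \<epsilon> \<le> g k m w \<and> (\<forall>j<m. g k j w < \<epsilon>)} \<in> sets (Fm k)"
        unfolding eqs .
      then show ?thesis unfolding spF by (rule sets.Int[OF C])
    qed
    have Iev: "{w\<in>space M. I k w = m} \<in> events" for m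
    proof -
      have "I k \<in> M \<rightarrow>\<^sub>M count_space UNIV" using Xm[of "Inr k"] by (intro count_meas) (simp add: Xf_def)
      then have "I k -` {m} \<inter> space M \<in> events" by (rule measurable_sets) simp
      moreover have "I k -` {m} \<inter> space M = {w\<in>space M. I k w = m}" by auto
      ultimately show ?thesis by metis
    qed
    show ?thesis
      unfolding r_def hit_def good_def
    proof (rule key_bound[OF n1])
      show "\<forall>w\<in>space M. I k w < n" using I_range by auto
      show "C \<in> events" using C Fsub by blast
      show "C \<inter> {w\<in>space M. \<epsilon> \<le> g k m w \<and> (\<forall>j<m. g k j w < \<epsilon>)} \<in> events" for m using Dset Fsub by blast
      show "{w\<in>space M. I k w = m} \<in> events" for m by (rule Iev)
      show "prob (C \<inter> {w\<in>space M. \<epsilon> \<le> g k m w \<and> (\<forall>j<m. g k j w < \<epsilon>)} \<inter> {w\<in>space M. I k w = m}) =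
          prob (C \<inter> {w\<in>space M. \<epsilon> \<le> g k m w \<and> (\<forall>j<m. g k j w < \<epsilon>)}) / real n" if "m < n" for m
        using indF[OF Dset, of m] I_unif that by simp
    qed
  qed
  define Q where "Q d = {w\<in>space M. qual (\<lambda>j. hit j w) (\<lambda>j. good j w) p k0 d}" for d
  have spaceF: "space M \<in> sets (Fm k0)" using sets.top[of "Fm k0"] unfolding spF .
  have Qb: "Q d \<in> events \<and> prob (space M \<inter> Q d) \<le> r ^ p * prob (space M)" for d
    unfolding Q_def
    by (rule qual_bound[OF spF Fsub Fmono Hset HGset key r spaceF])
  have Teq: "T q w = hit_time (\<lambda>k. hit k w) q" for q w
  proof -
    have "(\<lambda>k. \<epsilon> \<le> grad_max n (Lh kp n (dsms_bw nu hmin hmax h1 U k w)) (dsms_state kp' n nu hmin hmax h1 X0 U I k w)) = (\<lambda>k. hit k w)"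
      by (simp add: grad_max_ge[OF n1] hit_def g_def)
    then show ?thesis by (simp add: assms(16))
  qed
  have Aeq: "A = {w\<in>space M. \<forall>k\<ge>k0. good k w}" by (simp add: A_def good_def g_def)
  have Tfin: "{w\<in>space M. T (k0 + p) w < \<infinity>} = {w\<in>space M. \<exists>N. real (k0 + p) \<le> (\<Sum>k<N. if hit k w then 1 else 0)}"
    by (simp only: Teq hit_time_fin' card_real_sum[symmetric] of_nat_le_iff)
  define Ev where "Ev = {w\<in>space M. T (k0 + p) w < \<infinity>} \<inter> A"
  have Evm: "Ev \<in> events"
  proof -
    have fm: "(\<lambda>w. \<Sum>k<N. if hit k w then 1 else (0::real)) \<in> borel_measurable M" for N
      using HM by (intro borel_measurable_sum measurable_If) auto
    have "{w\<in>space M. \<exists>N::nat. real (k0 + p) \<le> (\<Sum>k<N. if hit k w then 1 else 0)} \<in> events"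
      by (rule sets.sets_Collect_countable_Ex) (rule ge_set[OF fm])
    moreover have "{w\<in>space M. \<forall>k::nat. k0 \<le> k \<longrightarrow> good k w} \<in> events"
    proof (rule sets.sets_Collect_countable_All)
      fix k :: nat
      show "{w\<in>space M. k0 \<le> k \<longrightarrow> good k w} \<in> events"
      proof (cases "k0 \<le> k")
        case True
        then have eq: "{w\<in>space M. k0 \<le> k \<longrightarrow> good k w} = {w\<in>space M. good k w}" by blast
        show ?thesis unfolding eq by (rule goodM)
      next
        case False
        then have eq: "{w\<in>space M. k0 \<le> k \<longrightarrow> good k w} = space M" by blast
        show ?thesis unfolding eq by (rule sets.top)
      qed
    qed
    ultimately show ?thesis unfolding Ev_def Tfin Aeq by (rule sets.Int)
  qed
  have inc: "incseq (\<lambda>d. Ev \<inter> Q d)"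
  proof (rule incseq_SucI)
    fix d
    show "Ev \<inter> Q d \<subseteq> Ev \<inter> Q (Suc d)"
    proof
      fix w assume w: "w \<in> Ev \<inter> Q d"
      then have gw: "\<forall>k\<ge>k0. good k w" by (auto simp: Ev_def Aeq)
      have "card {k. k0 \<le> k \<and> k < k0 + d \<and> hit k w} \<le> card {k. k0 \<le> k \<and> k < k0 + Suc d \<and> hit k w}"
        by (intro card_mono) auto
      moreover have q1: "qual (\<lambda>j. hit j w) (\<lambda>j. good j w) p k0 d" using w unfolding Q_def by blast
      then have "p \<le> card {k. k0 \<le> k \<and> k < k0 + d \<and> hit k w}"
        using qual_card[OF gw, of "\<lambda>j. hit j w" p d] by blast
      ultimately have "qual (\<lambda>j. hit j w) (\<lambda>j. good j w) p k0 (Suc d)"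
        using qual_card[OF gw, of "\<lambda>j. hit j w" p "Suc d"] by linarith
      then show "w \<in> Ev \<inter> Q (Suc d)" using w unfolding Q_def by blast
    qed
  qed
  have Un: "(\<Union>d. Ev \<inter> Q d) = Ev"
  proof (intro set_eqI iffI)
    fix w assume w: "w \<in> Ev"
    then have gw: "\<forall>k\<ge>k0. good k w" by (auto simp: Ev_def Aeq)
    from w have "T (k0 + p) w < \<infinity>" unfolding Ev_def by blast
    then have "\<exists>N. k0 + p \<le> card {k. k < N \<and> hit k w}" unfolding Teq hit_time_fin' .
    then obtain N where N: "k0 + p \<le> card {k. k < N \<and> hit k w}" by blast
    with card_split_k0[of N "\<lambda>k. hit k w" k0] have "p \<le> card {k. k0 \<le> k \<and> k < k0 + N \<and> hit k w}" by simp
    then have "qual (\<lambda>j. hit j w) (\<lambda>j. good j w) p k0 N"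
      using qual_card[OF gw, of "\<lambda>j. hit j w" p N] by blast
    then have "w \<in> Q N" using w unfolding Q_def Ev_def by blast
    with w show "w \<in> (\<Union>d. Ev \<inter> Q d)" by auto
  qed auto
  have lim: "(\<lambda>d. prob (Ev \<inter> Q d)) \<longlonglongrightarrow> prob Ev"
    using Lim_measure_incseq[of "\<lambda>d. Ev \<inter> Q d" M] inc Evm Qb Un by (auto simp: emeasure_eq_measure)
  have "prob (Ev \<inter> Q d) \<le> r ^ p" for d
  proof -
    have "prob (Ev \<inter> Q d) \<le> prob (space M \<inter> Q d)"
      using Qb[of d] Evm by (intro finite_measure_mono) (auto dest: sets.sets_into_space)
    also have "\<dots> \<le> r ^ p"
    proof -
      have "prob (space M \<inter> Q d) \<le> r ^ p * 1" using Qb[of d] prob_space by metis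
      then show ?thesis by simp
    qed
    finally show ?thesis .
  qed
  then have "prob Ev \<le> r ^ p" by (intro LIMSEQ_le_const2[OF lim]) auto
  then show ?thesis using Evm unfolding Ev_def r_def by simp
qed

end
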